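(* For all integers $m,n\ge 2$, \[ a(m+n-2)\le \tfrac{1}{6}\,a(m)\,a(n). \] Consequently, for every $n\ge 3$, \[ s\le \left(\frac{a(n)}{6}\right)^{\frac{1}{n-2}}. \]
   Context: Let $\Sigma=\{0,1,2\}$. A word is a finite string of letters from $\Sigma$, and its length is its number of letters. A word $w$ is square-free if it cannot be written as $w=xyyz$ with words $x,y,z$ and $y$ nonempty. $\mathcal{A}(n)$ denotes the set of square-free words of length $n$ over $\Sigma$, and $a(n)=|\mathcal{A}(n)|$. The limit $s=\lim_{n\to\infty}a(n)^{1/n}$ exists; it is the growth rate of ternary square-free words. *)

theory Defs
  imports Complex_Main
begin

definition ternary_word :: "nat list \<Rightarrow> bool" where
  "ternary_word w \<longleftrightarrow> set w \<subseteq> {0, 1, 2}"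

definition square_free :: "'a list \<Rightarrow> bool" where
  "square_free w \<longleftrightarrow> \<not> (\<exists>x y z. y \<noteq> [] \<and> w = x @ y @ y @ z)"

definition sqf_words :: "nat \<Rightarrow> nat list set" where
  "sqf_words n = {w. ternary_word w \<and> length w = n \<and> square_free w}"

definition a :: "nat \<Rightarrow> nat" where
  "a n = card (sqf_words n)"

definition growth_rate :: real where
  "growth_rate = lim (\<lambda>n. root n (real (a n)))"

end

theory Submission
  imports Defs
begin


definition fperm :: "nat \<Rightarrow> nat \<Rightarrow> nat \<Rightarrow> nat" where
  "fperm x y c = (if c = 0 then x else if c = 1 then y else 3 - x - y)"
definition ginv :: "nat \<Rightarrow> nat \<Rightarrow> nat \<Rightarrow> nat" where
  "ginv x y c = (if c = x then 0 else if c = y then 1 else 2)"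

definition PP :: "(nat \<times> nat) set" where
  "PP = {(x,y). x \<in> {0,1,2} \<and> y \<in> {0,1,2} \<and> x \<noteq> y}"

lemma PP_eq: "PP = {(0,1),(0,2),(1,0),(1,2),(2,0),(2,1)}"
  unfolding PP_def by auto

lemma card_PP: "card PP = 6"
  unfolding PP_eq by simp

lemma finite_PP: "finite PP" unfolding PP_eq by simp

lemma fperm_range: "(x,y) \<in> PP \<Longrightarrow> fperm x y c \<in> {0,1,2}"
  unfolding PP_eq fperm_def by auto

lemma ginv_range: "ginv x y c \<in> {0,1,2}"
  unfolding ginv_def by simp

lemma ginv_fperm_all: "\<forall>p\<in>PP. \<forall>c\<in>{0,1,2}. ginv (fst p) (snd p) (fperm (fst p) (snd p) c) = c"
  by (simp add: PP_eq fperm_def ginv_def)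

lemma ginv_fperm: "(x,y) \<in> PP \<Longrightarrow> c \<in> {0,1,2} \<Longrightarrow> ginv x y (fperm x y c) = c"
  using ginv_fperm_all by fastforce

lemma fperm_ginv_all: "\<forall>p\<in>PP. \<forall>c\<in>{0,1,2}. fperm (fst p) (snd p) (ginv (fst p) (snd p) c) = c"
  by (simp add: PP_eq fperm_def ginv_def)

lemma fperm_ginv: "(x,y) \<in> PP \<Longrightarrow> c \<in> {0,1,2} \<Longrightarrow> fperm x y (ginv x y c) = c"
  using fperm_ginv_all by fastforce

lemma map_ginv_fperm: "(x,y) \<in> PP \<Longrightarrow> ternary_word w \<Longrightarrow> map (ginv x y) (map (fperm x y) w) = w"
  unfolding ternary_word_def by (induction w) (auto simp: ginv_fperm)

lemma map_fperm_ginv: "(x,y) \<in> PP \<Longrightarrow> ternary_word w \<Longrightarrow> map (fperm x y) (map (ginv x y) w) = w"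
  unfolding ternary_word_def by (induction w) (auto simp: fperm_ginv)

lemma sf_map: assumes "map g (map f w) = w" "square_free w" shows "square_free (map f w)"
  unfolding square_free_def
proof
  assume "\<exists>x y z. y \<noteq> [] \<and> map f w = x @ y @ y @ z"
  then obtain x y z where h: "y \<noteq> []" "map f w = x @ y @ y @ z" by blast
  then have "w = map g x @ map g y @ map g y @ map g z" using assms(1) by (metis map_append)
  moreover have "map g y \<noteq> []" using h by simp
  ultimately show False using assms(2) unfolding square_free_def by blast
qed

lemma sf_take: "square_free w \<Longrightarrow> square_free (take k w)"
  unfolding square_free_def
  by (metis append.assoc append_take_drop_id)

lemma sf_drop: "square_free w \<Longrightarrow> square_free (drop k w)"
  unfolding square_free_def
  by (metis append.assoc append_take_drop_id)

lemma sf_distinct: "square_free w \<Longrightarrow> Suc i < length w \<Longrightarrow> w!i \<noteq> w!Suc i"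
proof
  assume sf: "square_free w" and l: "Suc i < length w" and e: "w!i = w!Suc i"
  have "drop i w = w!i # w!Suc i # drop (Suc (Suc i)) w"
    using l by (simp add: Cons_nth_drop_Suc)
  then have "w = take i w @ [w!i] @ [w!i] @ drop (Suc (Suc i)) w"
    using e by (metis append_Cons append_Nil append_take_drop_id)
  then show False using sf unfolding square_free_def by blast
qed

lemma ternary_map_fperm: "(x,y) \<in> PP \<Longrightarrow> ternary_word (map (fperm x y) w)"
  unfolding ternary_word_def set_map by (rule image_subsetI) (rule fperm_range)

lemma ternary_map_ginv: "ternary_word (map (ginv x y) w)"
  unfolding ternary_word_def set_map by (rule image_subsetI) (rule ginv_range)

lemma finite_sqf: "finite (sqf_words n)"
proof -
  have "sqf_words n \<subseteq> {w. set w \<subseteq> {0,1,2} \<and> length w = n}"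
    unfolding sqf_words_def ternary_word_def by auto
  then show ?thesis using finite_lists_length_eq[of "{0,1,2::nat}" n] finite_subset by auto
qed

definition EE :: "nat \<Rightarrow> nat list set" where
  "EE m = {w \<in> sqf_words m. drop (m-2) w = [0,1]}"
definition SS :: "nat \<Rightarrow> nat list set" where
  "SS m = {w \<in> sqf_words m. take 2 w = [0,1]}"

lemma finite_EE: "finite (EE m)" unfolding EE_def using finite_sqf by auto
lemma finite_SS: "finite (SS m)" unfolding SS_def using finite_sqf by auto

lemma sqf_map_fperm: "(x,y) \<in> PP \<Longrightarrow> u \<in> sqf_words m \<Longrightarrow> map (fperm x y) u \<in> sqf_words m"
  unfolding sqf_words_def using ternary_map_fperm sf_map[of "ginv x y" "fperm x y" u] map_ginv_fperm by auto

lemma EE_le: "6 * card (EE m) \<le> a m"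
proof -
  let ?F = "\<lambda>(p::nat\<times>nat, u). map (fperm (fst p) (snd p)) u"
  have inj: "inj_on ?F (PP \<times> EE m)"
  proof (rule inj_onI)
    fix pu pu' assume A0: "pu \<in> PP \<times> EE m" "pu' \<in> PP \<times> EE m" and eq0: "?F pu = ?F pu'"
    obtain x y u where pu: "pu = ((x,y),u)" by (metis prod.collapse)
    obtain x' y' u' where pu': "pu' = ((x',y'),u')" by (metis prod.collapse)
    have A: "(x,y) \<in> PP" "u \<in> EE m" "(x',y') \<in> PP" "u' \<in> EE m" using A0 pu pu' by auto
    have eq: "?F ((x,y),u) = ?F ((x',y'),u')" using eq0 pu pu' by simp
    have "drop (m-2) (map (fperm x y) u) = [x,y]"
      using A(2) unfolding EE_def by (simp add: drop_map fperm_def)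
    moreover have "drop (m-2) (map (fperm x' y') u') = [x',y']"
      using A(4) unfolding EE_def by (simp add: drop_map fperm_def)
    ultimately have xy: "x = x'" "y = y'" using eq by auto
    have "u = map (ginv x y) (map (fperm x y) u)"
      using A(1,2) map_ginv_fperm unfolding EE_def sqf_words_def by auto
    also have "\<dots> = u'" using eq xy A(3,4) map_ginv_fperm unfolding EE_def sqf_words_def by auto
    finally show "pu = pu'" using xy pu pu' by simp
  qed
  have "?F ` (PP \<times> EE m) \<subseteq> sqf_words m"
    using sqf_map_fperm unfolding EE_def by auto
  then have "card (PP \<times> EE m) \<le> card (sqf_words m)"
    using card_inj_on_le[OF inj] finite_sqf by blast
  then show ?thesis unfolding a_def by (simp add: card_cartesian_product card_PP)
qed

lemma SS_le: "6 * card (SS m) \<le> a m"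
proof -
  let ?F = "\<lambda>(p::nat\<times>nat, u). map (fperm (fst p) (snd p)) u"
  have inj: "inj_on ?F (PP \<times> SS m)"
  proof (rule inj_onI)
    fix pu pu' assume A0: "pu \<in> PP \<times> SS m" "pu' \<in> PP \<times> SS m" and eq0: "?F pu = ?F pu'"
    obtain x y u where pu: "pu = ((x,y),u)" by (metis prod.collapse)
    obtain x' y' u' where pu': "pu' = ((x',y'),u')" by (metis prod.collapse)
    have A: "(x,y) \<in> PP" "u \<in> SS m" "(x',y') \<in> PP" "u' \<in> SS m" using A0 pu pu' by auto
    have eq: "?F ((x,y),u) = ?F ((x',y'),u')" using eq0 pu pu' by simp
    have "take 2 (map (fperm x y) u) = [x,y]"
      using A(2) unfolding SS_def by (simp add: take_map fperm_def)
    moreover have "take 2 (map (fperm x' y') u') = [x',y']"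
      using A(4) unfolding SS_def by (simp add: take_map fperm_def)
    ultimately have xy: "x = x'" "y = y'" using eq by auto
    have "u = map (ginv x y) (map (fperm x y) u)"
      using A(1,2) map_ginv_fperm unfolding SS_def sqf_words_def by auto
    also have "\<dots> = u'" using eq xy A(3,4) map_ginv_fperm unfolding SS_def sqf_words_def by auto
    finally show "pu = pu'" using xy pu pu' by simp
  qed
  have "?F ` (PP \<times> SS m) \<subseteq> sqf_words m"
    using sqf_map_fperm unfolding SS_def by auto
  then have "card (PP \<times> SS m) \<le> card (sqf_words m)"
    using card_inj_on_le[OF inj] finite_sqf by blast
  then show ?thesis unfolding a_def by (simp add: card_cartesian_product card_PP)
qed

lemma two_list: "length l = 2 \<Longrightarrow> l = [l!0, l!1]"
  by (cases l; cases "tl l") auto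

lemma main_le:
  assumes m: "2 \<le> m" and n: "2 \<le> n"
  shows "a (m+n-2) \<le> 6 * card (EE m) * card (SS n)"
proof -
  define F where "F = (\<lambda>w::nat list. let x = w!(m-2); y = w!(m-1); v = map (ginv x y) w in
      ((x,y), take m v, drop (m-2) v))"
  have key: "w!(m-2) \<in> {0,1,2} \<and> w!(m-1) \<in> {0,1,2} \<and> w!(m-2) \<noteq> w!(m-1)"
    if w: "w \<in> sqf_words (m+n-2)" for w
  proof -
    have l: "length w = m+n-2" "ternary_word w" "square_free w" using w unfolding sqf_words_def by auto
    have "w!(m-2) \<in> set w" "w!(m-1) \<in> set w" using l m n by auto
    moreover have "w!(m-2) \<noteq> w!Suc (m-2)" using sf_distinct[OF l(3)] l m n by auto
    ultimately show ?thesis using l(2) m unfolding ternary_word_def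
      by (auto simp: Suc_diff_Suc numeral_2_eq_2)
  qed
  have inj: "inj_on F (sqf_words (m+n-2))"
  proof (rule inj_onI)
    fix w w' assume w: "w \<in> sqf_words (m+n-2)" and w': "w' \<in> sqf_words (m+n-2)" and eq: "F w = F w'"
    define x where "x = w!(m-2)"
    define y where "y = w!(m-1)"
    have xy: "x = w'!(m-2)" "y = w'!(m-1)" using eq unfolding F_def x_def y_def by (auto simp: Let_def)
    have P: "(x,y) \<in> PP" using key[OF w] unfolding PP_def x_def y_def by auto
    have Fw: "F w = ((x,y), take m (map (ginv x y) w), drop (m-2) (map (ginv x y) w))"
      unfolding F_def x_def y_def by (simp add: Let_def)
    have Fw': "F w' = ((x,y), take m (map (ginv x y) w'), drop (m-2) (map (ginv x y) w'))"
      unfolding F_def xy by (simp add: Let_def)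
    have t: "take m (map (ginv x y) w) = take m (map (ginv x y) w')"
      and d: "drop (m-2) (map (ginv x y) w) = drop (m-2) (map (ginv x y) w')"
      using eq Fw Fw' by auto
    have "take (m-2) (map (ginv x y) w) = take (m-2) (map (ginv x y) w')"
      using arg_cong[OF t, of "take (m-2)"] by (simp add: min_def)
    then have "map (ginv x y) w = map (ginv x y) w'" using d
      by (metis append_take_drop_id)
    then have "map (fperm x y) (map (ginv x y) w) = map (fperm x y) (map (ginv x y) w')" by simp
    then show "w = w'" using map_fperm_ginv[OF P] w w' unfolding sqf_words_def by auto
  qed
  have img: "F ` sqf_words (m+n-2) \<subseteq> PP \<times> EE m \<times> SS n"
  proof (rule image_subsetI)
    fix w assume w: "w \<in> sqf_words (m+n-2)"
    define x where "x = w!(m-2)"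
    define y where "y = w!(m-1)"
    define v where "v = map (ginv x y) w"
    have P: "(x,y) \<in> PP" using key[OF w] unfolding PP_def x_def y_def by auto
    have l: "length w = m+n-2" "ternary_word w" "square_free w" using w unfolding sqf_words_def by auto
    have lv: "length v = m+n-2" "ternary_word v" "square_free v"
      using l ternary_map_ginv sf_map[of "fperm x y" "ginv x y" w] map_fperm_ginv[OF P]
      unfolding v_def by auto
    have v0: "v!(m-2) = 0" "v!(m-1) = 1"
      using l m n unfolding v_def x_def y_def ginv_def using key[OF w] by auto
    have Fw: "F w = ((x,y), take m v, drop (m-2) v)" unfolding F_def x_def y_def v_def by (simp add: Let_def)
    have "take m v \<in> EE m"
    proof -
      have "drop (m-2) (take m v) = [0,1]"
        using two_list[of "drop (m-2) (take m v)"] lv m n v0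
        by (simp add: numeral_2_eq_2 Suc_diff_Suc)
      moreover have "ternary_word (take m v)" using lv(2) unfolding ternary_word_def
        by (meson order_trans set_take_subset)
      ultimately show ?thesis unfolding EE_def sqf_words_def using lv sf_take m n by auto
    qed
    moreover have "drop (m-2) v \<in> SS n"
    proof -
      have "take 2 (drop (m-2) v) = [0,1]"
        using two_list[of "take 2 (drop (m-2) v)"] lv m n v0
        by (simp add: numeral_2_eq_2 Suc_diff_Suc)
      moreover have "ternary_word (drop (m-2) v)" using lv(2) unfolding ternary_word_def
        by (meson order_trans set_drop_subset)
      ultimately show ?thesis unfolding SS_def sqf_words_def using lv sf_drop m n by auto
    qed
    ultimately show "F w \<in> PP \<times> EE m \<times> SS n" using Fw P by auto
  qed
  have "card (sqf_words (m+n-2)) \<le> card (PP \<times> EE m \<times> SS n)"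
    using card_inj_on_le[OF inj img] finite_PP finite_EE finite_SS by auto
  then show ?thesis unfolding a_def by (simp add: card_cartesian_product card_PP)
qed

lemma part1: assumes "2 \<le> m" "2 \<le> n"
  shows "real (a (m + n - 2)) \<le> (1/6) * real (a m) * real (a n)"
proof -
  have "6 * a (m+n-2) \<le> (6 * card (EE m)) * (6 * card (SS n))"
    using main_le[OF assms] by simp
  also have "\<dots> \<le> a m * a n" using EE_le SS_le by (rule mult_le_mono)
  finally have "6 * a (m+n-2) \<le> a m * a n" .
  then have "real (6 * a (m+n-2)) \<le> real (a m * a n)" by (rule of_nat_mono)
  then have "6 * real (a (m+n-2)) \<le> real (a m) * real (a n)" by simp
  then show ?thesis by simp
qed

lemma ge6: assumes "2 \<le> m" "0 < a m" shows "6 \<le> a m"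
proof -
  have "a m \<le> 6 * card (EE m) * card (SS 2)" using main_le[OF assms(1), of 2] by simp
  then have "card (EE m) \<noteq> 0" using assms(2) by (cases "card (EE m) = 0") auto
  then show ?thesis using EE_le[of m] by linarith
qed

lemma pos_mono: assumes "0 < a (n+k)" shows "0 < a n"
proof -
  obtain w where w: "w \<in> sqf_words (n+k)" using assms unfolding a_def
    by (metis card.empty ex_in_conv less_irrefl)
  then have "take n w \<in> sqf_words n" unfolding sqf_words_def ternary_word_def
    using sf_take set_take_subset[of n w] by auto
  then have "sqf_words n \<noteq> {}" by auto
  then show ?thesis unfolding a_def using finite_sqf[of n] by (simp add: card_gt_0_iff)
qed



lemma powr_inv_n_lim: "0 < (C::real) \<Longrightarrow> (\<lambda>n. C powr (1 / real n)) \<longlonglongrightarrow> 1"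
proof -
  assume C: "0 < C"
  have "(\<lambda>n. C powr (1 / real n)) \<longlonglongrightarrow> C powr 0"
    by (rule tendsto_powr[OF tendsto_const lim_1_over_n]) (use C in auto)
  then show ?thesis using C by simp
qed

lemma fekete_like:
  fixes f :: "nat \<Rightarrow> real"
  assumes sub: "\<And>m n. 2 \<le> m \<Longrightarrow> 2 \<le> n \<Longrightarrow> f (m+n-2) \<le> f m * f n / 6"
    and ge: "\<And>n. 2 \<le> n \<Longrightarrow> 6 \<le> f n"
  shows "(\<lambda>n. root n (f n)) \<longlonglongrightarrow> Inf ((\<lambda>N. (f N / 6) powr (1/(real N - 2))) ` {3..})"
proof -
  define B where "B = (\<lambda>N. (f N / 6) powr (1/(real N - 2)))"
  define L where "L = Inf (B ` {3..})"
  have B0: "B N \<ge> 0" for N by (simp add: B_def)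
  have bdd: "bdd_below (B ` {3..})" using B0 by (intro bdd_belowI2[where m=0])
  have LB: "L \<le> B N" if "N \<ge> 3" for N
    unfolding L_def using that bdd by (intro cInf_lower) auto
  have L0: "0 \<le> L" unfolding L_def using B0 by (intro cInf_greatest) auto
  have "(\<lambda>n. root n (f n)) \<longlonglongrightarrow> L"
  proof (rule order_tendstoI)
    fix c assume "L < c"
    then obtain N where N: "N \<ge> 3" "B N < c"
      using cInf_lessD[of "B ` {3..}" c] unfolding L_def by auto
    define K where "K = N - 2"
    have K: "K \<ge> 1" "N = K + 2" "real N - 2 = real K" using N unfolding K_def by auto
    define b where "b k = f (k+2) / 6" for k
    have b1: "b k \<ge> 1" for k using ge[of "k+2"] by (simp add: b_def)
    have bsub: "b (i+j) \<le> b i * b j" for i j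
    proof -
      have e: "i + 2 + (j + 2) - 2 = (i+j) + 2" by simp
      show ?thesis using sub[of "i+2" "j+2"] unfolding b_def e by simp
    qed
    define \<beta> where "\<beta> = b K"
    have \<beta>1: "\<beta> \<ge> 1" unfolding \<beta>_def by (rule b1)
    have pow: "b (q*K + r) \<le> \<beta>^q * b r" for q r
    proof (induction q)
      case 0 then show ?case by simp
    next
      case (Suc q)
      have "b (Suc q * K + r) = b (K + (q*K + r))" by (simp add: algebra_simps)
      also have "\<dots> \<le> \<beta> * b (q*K + r)" using bsub unfolding \<beta>_def by blast
      also have "\<dots> \<le> \<beta> * (\<beta>^q * b r)" using Suc \<beta>1 by (intro mult_left_mono) auto
      finally show ?case by simp
    qed
    define M where "M = (\<Sum>r<K. b r)"
    have bM: "b r \<le> M" if "r < K" for r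
      unfolding M_def using that b1 by (intro member_le_sum) (auto intro: order_trans[OF zero_le_one])
    have M1: "M \<ge> 1" using bM[of 0] b1[of 0] K by auto
    have BN: "B N = \<beta> powr (1 / real K)"
      unfolding B_def \<beta>_def b_def K(3) using K(2) by simp
    have upper: "root n (f n) \<le> (6*M) powr (1 / real n) * B N" if n: "n \<ge> 2" for n
    proof -
      define q where "q = (n-2) div K"
      define r where "r = (n-2) mod K"
      have qr: "n - 2 = q*K + r" unfolding q_def r_def by simp
      have rK: "r < K" unfolding r_def using K by simp
      have qn: "real q \<le> real n / real K"
      proof -
        have "q * K \<le> n" using qr n by linarith
        then have "real q * real K \<le> real n" by (metis of_nat_le_iff of_nat_mult)
        then show ?thesis using K by (simp add: field_simps)
      qed
      have "n - 2 + 2 = n" using n by simp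
      then have "f n = 6 * b (n-2)" by (simp add: b_def)
      also have "\<dots> \<le> 6 * (\<beta>^q * b r)" using pow[of q r] qr by simp
      also have "\<dots> \<le> 6 * (\<beta> powr (real n / real K) * M)"
      proof -
        have "\<beta>^q = \<beta> powr real q" using \<beta>1 by (simp add: powr_realpow)
        also have "\<dots> \<le> \<beta> powr (real n / real K)" using qn \<beta>1 by (rule powr_mono)
        finally have h: "\<beta>^q \<le> \<beta> powr (real n / real K)" .
        show ?thesis using h bM[OF rK] b1[of r] \<beta>1
          by (intro mult_left_mono mult_mono) auto
      qed
      finally have fn: "f n \<le> 6 * (\<beta> powr (real n / real K) * M)" .
      have "root n (f n) = f n powr (1 / real n)"
        using n ge[OF n] by (intro root_powr_inverse) auto
      also have "\<dots> \<le> (6 * (\<beta> powr (real n / real K) * M)) powr (1 / real n)"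
        using fn ge[OF n] by (intro powr_mono2) auto
      also have "\<dots> = (6*M) powr (1 / real n) * (\<beta> powr (real n / real K)) powr (1 / real n)"
        by (simp add: powr_mult mult_ac)
      also have "(\<beta> powr (real n / real K)) powr (1 / real n) = \<beta> powr (1 / real K)"
        using n by (simp add: powr_powr)
      finally show ?thesis using BN by simp
    qed
    have "(\<lambda>n. (6*M) powr (1 / real n) * B N) \<longlonglongrightarrow> 1 * B N"
      using M1 by (intro tendsto_mult powr_inv_n_lim tendsto_const) auto
    then have "eventually (\<lambda>n. (6*M) powr (1 / real n) * B N < c) sequentially"
      using N(2) by (intro order_tendstoD(2)) auto
    moreover have "eventually (\<lambda>n. n \<ge> 2) sequentially" by (rule eventually_ge_at_top)
    ultimately show "eventually (\<lambda>n. root n (f n) < c) sequentially"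
      by eventually_elim (use upper in fastforce)
  next
    fix c assume c: "c < L"
    show "eventually (\<lambda>n. c < root n (f n)) sequentially"
    proof (cases "c < 0")
      case True
      have "eventually (\<lambda>n. n \<ge> 2) sequentially" by (rule eventually_ge_at_top)
      then show ?thesis
      proof eventually_elim
        case (elim n)
        have "0 \<le> root n (f n)" using ge[of n] elim by (intro real_root_ge_zero) auto
        then show ?case using True by linarith
      qed
    next
      case False
      then have Lp: "L > 0" using c by auto
      define g where "g n = 6 powr (1 / real n) * L powr (1 - 2 * (1 / real n))" for n
      have lower: "g n \<le> root n (f n)" if n: "n \<ge> 3" for n
      proof -
        have "L powr (real n - 2) \<le> B n powr (real n - 2)"
          using LB[OF n] L0 n by (intro powr_mono2) auto
        also have "\<dots> = f n / 6" unfolding B_def using n ge[of n]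
          by (simp add: powr_powr)
        finally have h: "6 * L powr (real n - 2) \<le> f n" by simp
        have "g n = (6 * L powr (real n - 2)) powr (1 / real n)"
          unfolding g_def using n by (simp add: powr_mult powr_powr field_simps)
        also have "\<dots> \<le> f n powr (1 / real n)" using h by (intro powr_mono2) auto
        also have "\<dots> = root n (f n)"
          using n ge[of n] by (intro root_powr_inverse[symmetric]) auto
        finally show ?thesis .
      qed
      have "g \<longlonglongrightarrow> 1 * L powr (1 - 2 * 0)"
        unfolding g_def using Lp
        by (intro tendsto_mult powr_inv_n_lim tendsto_powr tendsto_const tendsto_diff lim_1_over_n) auto
      then have "g \<longlonglongrightarrow> L" using Lp by simp
      then have "eventually (\<lambda>n. c < g n) sequentially" using c by (intro order_tendstoD(1)) auto
      moreover have "eventually (\<lambda>n. n \<ge> 3) sequentially" by (rule eventually_ge_at_top)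
      ultimately show ?thesis
        by eventually_elim (use lower in fastforce)
    qed
  qed
  then show ?thesis unfolding L_def B_def .
qed


theorem mainTheorem1:
  shows "(\<forall>m n. 2 \<le> m \<longrightarrow> 2 \<le> n \<longrightarrow>
            real (a (m + n - 2)) \<le> (1/6) * real (a m) * real (a n))
       \<and> (\<forall>n. 3 \<le> n \<longrightarrow>
            growth_rate \<le> (real (a n) / 6) powr (1 / (real n - 2)))"
proof -
  have P1: "\<forall>m n. 2 \<le> m \<longrightarrow> 2 \<le> n \<longrightarrow>
            real (a (m + n - 2)) \<le> (1/6) * real (a m) * real (a n)" using part1 by blast
  have P2: "\<forall>n. 3 \<le> n \<longrightarrow> growth_rate \<le> (real (a n) / 6) powr (1 / (real n - 2))"
  proof (cases "\<forall>n. 0 < a n")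
    case True
    define B where "B = (\<lambda>N. (real (a N) / 6) powr (1/(real N - 2)))"
    have lim: "(\<lambda>n. root n (real (a n))) \<longlonglongrightarrow> Inf (B ` {3..})"
      unfolding B_def
    proof (rule fekete_like)
      fix m n :: nat assume "2 \<le> m" "2 \<le> n"
      then show "real (a (m + n - 2)) \<le> real (a m) * real (a n) / 6" using part1 by simp
    next
      fix n :: nat assume "2 \<le> n"
      then have "6 \<le> a n" using ge6 True by blast
      then show "6 \<le> real (a n)" by simp
    qed
    then have g: "growth_rate = Inf (B ` {3..})" unfolding growth_rate_def by (rule limI)
    have bdd: "bdd_below (B ` {3..})" unfolding B_def by (intro bdd_belowI2[where m=0]) simp
    show ?thesis
    proof (intro allI impI)
      fix n :: nat assume "3 \<le> n"
      then have "Inf (B ` {3..}) \<le> B n" using bdd by (intro cInf_lower) auto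
      then show "growth_rate \<le> (real (a n) / 6) powr (1 / (real n - 2))" using g unfolding B_def by simp
    qed
  next
    case False
    then obtain N0 where N0: "a N0 = 0" by auto
    have z: "a n = 0" if "n \<ge> N0" for n
      using pos_mono[of N0 "n - N0"] N0 that by auto
    have "eventually (\<lambda>n. root n (real (a n)) = 0) sequentially"
      using eventually_ge_at_top[of N0] by eventually_elim (simp add: z)
    then have "(\<lambda>n. root n (real (a n))) \<longlonglongrightarrow> 0" by (rule tendsto_eventually)
    then have "growth_rate = 0" unfolding growth_rate_def by (rule limI)
    then show ?thesis by simp
  qed
  show ?thesis using P1 P2 by blast
qed

end
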